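(* Let $\mathbb{T}$ be the Tribonacci sequence and, for $n\ge1$, let $C(n)$ be the number of distinct nonempty words $\omega$ such that $\omega\omega\omega$ is a factor of $\mathbb{T}[1,n]$. Then $C(n)=0$ for $n\leq57$. For $n\geq58$, let $m$ be such that $t_{m-1}+2t_{m-4}\leq n<t_{m}+2t_{m-3}$; then $m\geq7$ and \begin{equation*} C(n)= \begin{cases} n-\frac{1}{2}(4t_{m-1}-t_{m-2}-3t_{m-3}+m-6),&n\leq\frac{3t_{m-1}-t_{m-3}-3}{2};\\ \frac{1}{2}(t_{m-5}+t_{m-6}-m+3),&\text{otherwise}. \end{cases} \end{equation*}
   Context: The Tribonacci sequence $\mathbb{T}=x_1x_2x_3\cdots$ is the fixed point (infinite word starting with $a$) of the substitution $\sigma(a)=ab$, $\sigma(b)=ac$, $\sigma(c)=a$ over $\{a,b,c\}$. For $n\ge1$, $\mathbb{T}[1,n]=x_1\cdots x_n$ is its prefix of length $n$. The Tribonacci numbers are $t_m=|\sigma^m(a)|$ for $m\ge0$, with $t_{-2}=0$, $t_{-1}=1$; thus $t_0=1,t_1=2,t_2=4$ and $t_m=t_{m-1}+t_{m-2}+t_{m-3}$. *)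

theory Defs
  imports Complex_Main "HOL-Library.Sublist"
begin

datatype letter = La | Lb | Lc

fun sig :: "letter \<Rightarrow> letter list" where
  "sig La = [La, Lb]"
| "sig Lb = [La, Lc]"
| "sig Lc = [La]"

definition sigma :: "letter list \<Rightarrow> letter list" where
  "sigma w = concat (map sig w)"

text \<open>Tribonacci numbers t_m = |sigma^m(a)| for m >= 0, with t_(-2) = 0, t_(-1) = 1
  (values below -2 are never used; set to 0).\<close>
definition trib :: "int \<Rightarrow> nat" where
  "trib k = (if k \<ge> 0 then length ((sigma ^^ nat k) [La])
             else if k = -1 then 1 else 0)"

text \<open>The i-th letter (0-based) of the fixed point of sigma starting with a:
  sigma^k(a) is a prefix of sigma^(k+1)(a) and has length > i for k = Suc i.\<close>
definition trib_word :: "nat \<Rightarrow> letter" where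
  "trib_word i = (sigma ^^ Suc i) [La] ! i"

definition trib_prefix :: "nat \<Rightarrow> letter list" where
  "trib_prefix n = map trib_word [0..<n]"

definition cube_count :: "nat \<Rightarrow> nat" where
  "cube_count n = card {w. w \<noteq> [] \<and> sublist (w @ w @ w) (trib_prefix n)}"

end

theory Submission
  imports Defs
begin


lemma sigma_Nil[simp]: "sigma [] = []" by (simp add: sigma_def)
lemma sigma_Cons[simp]: "sigma (c # w) = sig c @ sigma w" by (simp add: sigma_def)
lemma sigma_append[simp]: "sigma (u @ v) = sigma u @ sigma v" by (simp add: sigma_def)

lemma sigmap_append: "(sigma ^^ k) (u @ v) = (sigma ^^ k) u @ (sigma ^^ k) v"
  by (induction k) auto

definition W :: "nat \<Rightarrow> letter list" where "W n = (sigma ^^ n) [La]"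
definition t :: "nat \<Rightarrow> nat" where "t n = length (W n)"

lemma W_Suc: "W (Suc n) = W n @ (sigma ^^ n) [Lb]"
proof -
  have "W (Suc n) = (sigma ^^ n) (sigma [La])" by (simp add: W_def funpow_Suc_right del: funpow.simps)
  also have "\<dots> = (sigma ^^ n) ([La] @ [Lb])" by simp
  finally show ?thesis using sigmap_append[of n "[La]" "[Lb]"] by (simp add: W_def)
qed

lemma sigb_Suc: "(sigma ^^ Suc n) [Lb] = W n @ (sigma ^^ n) [Lc]"
proof -
  have "(sigma ^^ Suc n) [Lb] = (sigma ^^ n) (sigma [Lb])" by (simp add: funpow_Suc_right del: funpow.simps)
  also have "\<dots> = (sigma ^^ n) ([La] @ [Lc])" by simp
  finally show ?thesis using sigmap_append[of n "[La]" "[Lc]"] by (simp add: W_def)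
qed

lemma sigc_Suc: "(sigma ^^ Suc n) [Lc] = W n"
proof -
  have "(sigma ^^ Suc n) [Lc] = (sigma ^^ n) (sigma [Lc])" by (simp add: funpow_Suc_right del: funpow.simps)
  thus ?thesis by (simp add: W_def)
qed

lemma t_rec: "t (n+3) = t (n+2) + t (n+1) + t n"
  using W_Suc[of "n+2"] sigb_Suc[of "n+1"] sigc_Suc[of n] by (simp add: t_def eval_nat_numeral)

lemma t_0: "t 0 = 1" and t_1: "t 1 = 2" and t_2: "t 2 = 4"
  by (simp_all add: t_def W_def numeral_eq_Suc)

lemma W_prefix: "prefix (W n) (W (Suc n))" using W_Suc by simp

lemma W_prefix_le: "m \<le> n \<Longrightarrow> prefix (W m) (W n)"
proof (induction n)
  case 0 then show ?case by simp
next
  case (Suc n)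
  show ?case
  proof (cases "m = Suc n")
    case True then show ?thesis by simp
  next
    case False
    then have "m \<le> n" using Suc.prems by simp
    then have "prefix (W m) (W n)" by (rule Suc.IH)
    then show ?thesis using W_prefix[of n] by (rule prefix_order.trans)
  qed
qed

lemma sigmap_nonempty: "w \<noteq> [] \<Longrightarrow> (sigma ^^ n) w \<noteq> []"
proof (induction n)
  case 0 then show ?case by simp
next
  case (Suc n)
  then obtain c r where "(sigma ^^ n) w = c # r" by (meson list.exhaust)
  then show ?case by (cases c) auto
qed

lemma t_Suc_gt: "t n < t (Suc n)"
proof -
  have "(sigma ^^ n) [Lb] \<noteq> []" by (rule sigmap_nonempty) simp
  then show ?thesis using W_Suc[of n] by (simp add: t_def)
qed

lemma t_mono_strict: "m < n \<Longrightarrow> t m < t n"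
proof (induction n)
  case 0 then show ?case by simp
next
  case (Suc n)
  show ?case
  proof (cases "m = n")
    case True then show ?thesis using t_Suc_gt by simp
  next
    case False
    then have "t m < t n" using Suc by simp
    then show ?thesis using t_Suc_gt[of n] by simp
  qed
qed

lemma t_ge: "t n \<ge> Suc n"
proof (induction n)
  case 0 then show ?case by (simp add: t_0)
next
  case (Suc n)
  then show ?case using t_Suc_gt[of n] by simp
qed

lemma tw_W: "i < t n \<Longrightarrow> trib_word i = W n ! i"
proof -
  assume i: "i < t n"
  have a: "i < t (Suc i)" using t_ge[of "Suc i"] by simp
  have "W (Suc i) ! i = W n ! i"
  proof (cases "Suc i \<le> n")
    case True
    then obtain r where "W n = W (Suc i) @ r" using W_prefix_le prefixE by metis
    then show ?thesis using a by (simp add: nth_append t_def)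
  next
    case False
    then obtain r where "W (Suc i) = W n @ r" using W_prefix_le prefixE by (metis nat_le_linear)
    then show ?thesis using i by (simp add: nth_append t_def)
  qed
  then show ?thesis by (simp add: trib_word_def W_def)
qed

lemma map_tw_W: "m \<le> t n \<Longrightarrow> map trib_word [0..<m] = take m (W n)"
  by (rule nth_equalityI) (auto simp: tw_W t_def)

definition pos :: "nat \<Rightarrow> nat" where "pos m = length (sigma (map trib_word [0..<m]))"

lemma FIX: "map trib_word [0..<pos m] = sigma (map trib_word [0..<m])"
proof -
  have m: "m \<le> t m" using t_ge[of m] by simp
  have e: "map trib_word [0..<m] = take m (W m)" using map_tw_W[OF m] .
  obtain r where r: "W m = take m (W m) @ r" by (metis append_take_drop_id)
  have "W (Suc m) = sigma (W m)" by (simp add: W_def)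
  also have "\<dots> = sigma (take m (W m)) @ sigma r" by (subst r) simp
  finally have ws: "W (Suc m) = sigma (take m (W m)) @ sigma r" .
  have pl: "pos m \<le> t (Suc m)" by (simp add: pos_def t_def ws e)
  have "map trib_word [0..<pos m] = take (pos m) (W (Suc m))" using map_tw_W[OF pl] .
  also have "\<dots> = sigma (take m (W m))" by (simp add: ws pos_def e)
  finally show ?thesis using e by simp
qed

lemma pos_0[simp]: "pos 0 = 0" by (simp add: pos_def)
lemma pos_Suc: "pos (Suc m) = pos m + length (sig (trib_word m))" by (simp add: pos_def)

lemma len_sig_pos: "length (sig c) \<ge> 1" by (cases c) auto

lemma pos_Suc_gt: "pos m < pos (Suc m)"
  by (cases "trib_word m") (auto simp: pos_Suc)

lemma pos_smono: "m < n \<Longrightarrow> pos m < pos n"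
proof (induction n)
  case 0 then show ?case by simp
next
  case (Suc n)
  show ?case
  proof (cases "m = n")
    case True then show ?thesis using pos_Suc_gt by simp
  next
    case False
    then have "pos m < pos n" using Suc by simp
    then show ?thesis using pos_Suc_gt[of n] by simp
  qed
qed

lemma pos_mono: "m \<le> n \<Longrightarrow> pos m \<le> pos n"
  using pos_smono[of m n] by (cases "m = n") auto

lemma pos_inj: "pos m = pos n \<Longrightarrow> m = n"
  using pos_smono[of m n] pos_smono[of n m] by (cases m n rule: linorder_cases) auto

lemma pos_less_iff: "pos m < pos n \<longleftrightarrow> m < n"
  using pos_smono[of m n] pos_mono[of n m] by (meson leD not_less)

lemma pos_ge: "pos m \<ge> m"
proof (induction m)
  case 0 then show ?case by simp
next
  case (Suc m) then show ?case using pos_Suc_gt[of m] by simp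
qed

lemma SEG: "a \<le> b \<Longrightarrow> map trib_word [pos a..<pos b] = sigma (map trib_word [a..<b])"
proof -
  assume ab: "a \<le> b"
  have "map trib_word [0..<b] = map trib_word [0..<a] @ map trib_word [a..<b]"
    using ab by (metis map_append upt_add_eq_append zero_le le_add_diff_inverse)
  then have "map trib_word [0..<pos b] = map trib_word [0..<pos a] @ sigma (map trib_word [a..<b])"
    by (simp add: FIX)
  moreover have "map trib_word [0..<pos b] = map trib_word [0..<pos a] @ map trib_word [pos a..<pos b]"
    using pos_mono[OF ab] by (metis map_append upt_add_eq_append zero_le le_add_diff_inverse)
  ultimately show ?thesis by simp
qed

lemma P1: "i < length (sig (trib_word m)) \<Longrightarrow> trib_word (pos m + i) = sig (trib_word m) ! i"
proof -
  assume i: "i < length (sig (trib_word m))"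
  have "map trib_word [pos m..<pos (Suc m)] = sig (trib_word m)"
    using SEG[of m "Suc m"] by simp
  moreover have "pos m + i < pos (Suc m)" using i by (simp add: pos_Suc)
  then have "map trib_word [pos m..<pos (Suc m)] ! i = trib_word (pos m + i)"
    by (subst nth_map_upt) auto
  ultimately show ?thesis by simp
qed

lemma tw_pos: "trib_word (pos m) = La"
  using P1[of 0 m] by (cases "trib_word m") auto

lemma block: "\<exists>m. pos m \<le> j \<and> j < pos (Suc m)"
proof (induction j)
  case 0 then show ?case using pos_Suc_gt[of 0] by (intro exI[of _ 0]) simp
next
  case (Suc j)
  then obtain m where m: "pos m \<le> j" "j < pos (Suc m)" by blast
  show ?case
  proof (cases "Suc j < pos (Suc m)")
    case True then show ?thesis using m by (intro exI[of _ m]) simp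
  next
    case False
    then have "Suc j = pos (Suc m)" using m by simp
    then show ?thesis using pos_Suc_gt[of "Suc m"] by (intro exI[of _ "Suc m"]) simp
  qed
qed

lemma block_unique: "m = m'" if "pos m \<le> j" "j < pos (Suc m)" "pos m' \<le> j" "j < pos (Suc m')"
proof (cases m m' rule: linorder_cases)
  case less
  then have "pos (Suc m) \<le> pos m'" using pos_mono[of "Suc m" m'] by simp
  then show ?thesis using that by simp
next
  case greater
  then have "pos (Suc m') \<le> pos m" using pos_mono[of "Suc m'" m] by simp
  then show ?thesis using that by simp
qed

lemma isa: "trib_word j = La \<longleftrightarrow> (\<exists>m. j = pos m)"
proof
  assume a: "trib_word j = La"
  obtain m where m: "pos m \<le> j" "j < pos (Suc m)" using block by blast
  show "\<exists>m. j = pos m"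
  proof (cases "j = pos m")
    case True then show ?thesis by blast
  next
    case False
    then have "j = pos m + 1" "length (sig (trib_word m)) = 2"
      using m by (cases "trib_word m"; auto simp: pos_Suc)+
    then have "trib_word j = sig (trib_word m) ! 1" using P1[of 1 m] by simp
    with a \<open>length (sig (trib_word m)) = 2\<close> show ?thesis by (cases "trib_word m") auto
  qed
qed (auto simp: tw_pos)

lemma decode: "trib_word (pos m + 1) = (case trib_word m of La \<Rightarrow> Lb | Lb \<Rightarrow> Lc | Lc \<Rightarrow> La)"
proof (cases "trib_word m")
  case Lc
  then have "pos m + 1 = pos (Suc m)" by (simp add: pos_Suc)
  then show ?thesis using tw_pos[of "Suc m"] Lc by simp
qed (use P1[of 1 m] in auto)

lemma decode_inj: "trib_word (pos m + 1) = trib_word (pos m' + 1) \<Longrightarrow> trib_word m = trib_word m'"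
  using decode[of m] decode[of m'] by (auto split: letter.splits)

lemma lastletter: "trib_word (pos (Suc m) - 1) = last (sig (trib_word m))"
proof (cases "trib_word m")
  case La then show ?thesis using P1[of 1 m] by (simp add: pos_Suc)
next
  case Lb then show ?thesis using P1[of 1 m] by (simp add: pos_Suc)
next
  case Lc then show ?thesis using P1[of 0 m] by (simp add: pos_Suc)
qed

lemma L1: "trib_word j \<noteq> La \<Longrightarrow> trib_word (Suc j) = La \<and> j > 0 \<and> trib_word (j - 1) = La"
proof -
  assume a: "trib_word j \<noteq> La"
  obtain m where m: "pos m \<le> j" "j < pos (Suc m)" using block by blast
  have ne: "j \<noteq> pos m" using a tw_pos by auto
  then have "j = pos m + 1" "Suc j = pos (Suc m)"
    using m by (cases "trib_word m"; auto simp: pos_Suc)+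
  then show ?thesis using tw_pos[of "Suc m"] tw_pos[of m] by auto
qed

lemma L2: "\<not> (trib_word j = La \<and> trib_word (j+1) = La \<and> trib_word (j+2) = La)"
proof
  assume a: "trib_word j = La \<and> trib_word (j+1) = La \<and> trib_word (j+2) = La"
  then obtain m where j: "j = pos m" using isa by blast
  have c1: "trib_word m = Lc" using a decode[of m] j by (simp split: letter.splits)
  then have j1: "j + 1 = pos (Suc m)" using j by (simp add: pos_Suc)
  have c2: "trib_word (Suc m) = Lc" using a decode[of "Suc m"] j1
    by (simp split: letter.splits add: numeral_2_eq_2)
  show False using L1[of m] c1 c2 by simp
qed

lemma pos_Suc2: "pos (m + 2) \<ge> pos m + 3"
proof -
  have "length (sig (trib_word m)) + length (sig (trib_word (Suc m))) \<ge> 3"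
  proof (cases "trib_word m = Lc")
    case True
    then have "trib_word (Suc m) = La" using L1[of m] by simp
    then show ?thesis using len_sig_pos[of "trib_word m"] by simp
  next
    case False
    then have "length (sig (trib_word m)) = 2" by (cases "trib_word m") auto
    then show ?thesis using len_sig_pos[of "trib_word (Suc m)"] by simp
  qed
  then show ?thesis by (simp add: pos_Suc numeral_2_eq_2)
qed



definition PER :: "nat \<Rightarrow> nat \<Rightarrow> nat \<Rightarrow> bool" where
  "PER a b p \<longleftrightarrow> (\<forall>i. a \<le> i \<longrightarrow> i < b \<longrightarrow> trib_word i = trib_word (i + p))"

lemma PER_D: "PER a b p \<Longrightarrow> a \<le> i \<Longrightarrow> i < b \<Longrightarrow> trib_word i = trib_word (i + p)"
  by (simp add: PER_def)

lemma Gstep: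
  assumes per: "PER (pos m0) B p" and "m0 \<le> m" and g: "pos (m+q) = pos m + p" and b: "pos m + 1 < B"
  shows "trib_word m = trib_word (m+q) \<and> pos (Suc m + q) = pos (Suc m) + p"
proof -
  have "pos m0 \<le> pos m" using pos_mono assms(2) by blast
  then have "trib_word (pos m + 1) = trib_word (pos m + 1 + p)" using PER_D[OF per _ b] by simp
  also have "pos m + 1 + p = pos (m+q) + 1" using g by simp
  finally have eq: "trib_word m = trib_word (m+q)" using decode_inj by blast
  then have "pos (Suc m + q) = pos (Suc m) + p" using g by (simp add: pos_Suc)
  with eq show ?thesis by simp
qed

lemma G:
  assumes per: "PER (pos m0) B p" and g0: "pos (m0+q) = pos m0 + p" and mm: "m0 \<le> m" and b: "pos m < B"
  shows "pos (m+q) = pos m + p"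
  using mm b
proof (induction m rule: dec_induct)
  case base then show ?case using g0 by simp
next
  case (step n)
  have "pos n + 1 \<le> pos (Suc n)" using pos_Suc_gt[of n] by simp
  then have b: "pos n + 1 < B" using step.prems by simp
  then have "pos (n+q) = pos n + p" using step by simp
  then show ?case using Gstep[OF per step.hyps(1) _ b] by simp
qed

lemma pos_add: "pos (a + k) \<ge> pos a + k"
proof (induction k)
  case 0 then show ?case by simp
next
  case (Suc k) then show ?case using pos_Suc_gt[of "a+k"] by simp
qed

lemma q_less_p:
  assumes "pos (m0 + q) = pos m0 + p" "q \<ge> 1" "p \<ge> 2"
  shows "q < p"
proof (cases "q \<ge> 2")
  case True
  have "pos (m0 + 2 + (q - 2)) \<ge> pos (m0 + 2) + (q - 2)" by (rule pos_add)
  moreover have "m0 + 2 + (q - 2) = m0 + q" using True by simp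
  ultimately show ?thesis using pos_Suc2[of m0] assms(1) True by simp
next
  case False then show ?thesis using assms by simp
qed

lemma AP: "p \<ge> 1 \<Longrightarrow> \<not> (\<forall>j\<ge>s. trib_word j = trib_word (j+p))"
proof (induction p arbitrary: s rule: less_induct)
  case (less p)
  show ?case
  proof
    assume per: "\<forall>j\<ge>s. trib_word j = trib_word (j+p)"
    show False
    proof (cases "p = 1")
      case True
      have e1: "trib_word s = trib_word (s+1)" "trib_word (s+1) = trib_word (s+2)"
        using per[rule_format, of s] per[rule_format, of "s+1"] True by (simp_all add: add.assoc)
      show False
      proof (cases "trib_word s = La")
        case True then show False using L2[of s] e1 by simp
      next
        case False then show False using L1[of s] e1 by simp
      qed
    next
      case False
      then have p2: "p \<ge> 2" using less.prems by simp
      obtain s' where s': "s' \<ge> s" "trib_word s' = La"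
      proof (cases "trib_word s = La")
        case True then show ?thesis using that by blast
      next
        case False then show ?thesis using that[of "Suc s"] L1[of s] by simp
      qed
      then obtain m0 where m0: "s' = pos m0" using isa by blast
      have "trib_word (s'+p) = La" using per[rule_format, of s'] s' by simp
      then obtain m1 where m1: "s' + p = pos m1" using isa by blast
      have "pos m0 < pos m1" using m0 m1 p2 by simp
      then have lt: "m0 < m1" using pos_less_iff by blast
      define q where "q = m1 - m0"
      have g0: "pos (m0+q) = pos m0 + p" using lt m0 m1 by (simp add: q_def)
      have q1: "q \<ge> 1" using lt by (simp add: q_def)
      have qp: "q < p" using q_less_p[OF g0 q1 p2] .
      have perB: "PER (pos m0) B p" for B unfolding PER_def
      proof (intro allI impI)
        fix i assume "pos m0 \<le> i"
        then have "s \<le> i" using s'(1) m0 by simp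
        then show "trib_word i = trib_word (i + p)" using per by blast
      qed
      have "\<forall>m\<ge>m0. trib_word m = trib_word (m+q)"
      proof (intro allI impI)
        fix m assume mm: "m0 \<le> m"
        have "pos (m+q) = pos m + p" using G[OF perB[of "pos m + 2"] g0 mm] by simp
        then show "trib_word m = trib_word (m+q)" using Gstep[OF perB[of "pos m + 2"] mm] by simp
      qed
      then show False using less.IH[OF qp q1] by blast
    qed
  qed
qed



primrec u :: "nat \<Rightarrow> letter list" where
  "u 0 = [La, La]"
| "u (Suc k) = sigma (u k) @ [La]"

definition P6 :: "letter list" where "P6 = [La,Lb,La,Lc,La,Lb]"
definition sk :: "nat \<Rightarrow> nat" where "sk k = length ((sigma ^^ k) P6)"

lemma W4: "W 4 = [La,Lb,La,Lc,La,Lb,La,La,Lb,La,Lc,La,Lb]"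
  by (simp add: W_def numeral_eq_Suc)

lemma tw_small: "map trib_word [0..<13] = [La,Lb,La,Lc,La,Lb,La,La,Lb,La,Lc,La,Lb]"
proof -
  have "t 4 = 13" by (simp add: t_def W4)
  then show ?thesis using map_tw_W[of 13 4] by (simp add: W4)
qed

lemma tw_nth: "i < 13 \<Longrightarrow> trib_word i = [La,Lb,La,Lc,La,Lb,La,La,Lb,La,Lc,La,Lb] ! i"
  using tw_small by (metis add_0 diff_zero nth_map_upt)

lemma tw_vals: "trib_word 0 = La" "trib_word 1 = Lb" "trib_word 2 = La" "trib_word 3 = Lc"
  "trib_word 4 = La" "trib_word 5 = Lb" "trib_word 6 = La" "trib_word 7 = La"
  by (subst tw_nth; simp)+

lemma tw6: "map trib_word [0..<6] = P6"
proof -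
  have "map trib_word [0..<6] = take 6 (map trib_word [0..<13])" by (simp add: take_map)
  then show ?thesis using tw_small by (simp add: P6_def)
qed

lemma pre_sk: "map trib_word [0..<sk k] = (sigma ^^ k) P6"
proof (induction k)
  case 0
  have "sk 0 = 6" by (simp add: sk_def P6_def)
  then show ?case by (simp only: funpow_0 id_apply tw6)
next
  case (Suc k)
  have "pos (sk k) = length (sigma (map trib_word [0..<sk k]))" by (simp add: pos_def)
  also have "\<dots> = length (sigma ((sigma ^^ k) P6))" by (simp only: Suc.IH)
  also have "\<dots> = sk (Suc k)" by (simp add: sk_def)
  finally have "pos (sk k) = sk (Suc k)" .
  then show ?case using FIX[of "sk k"] Suc.IH by simp
qed

lemma sk_Suc: "sk (Suc k) = pos (sk k)"
proof -
  have "pos (sk k) = length (sigma (map trib_word [0..<sk k]))" by (simp add: pos_def)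
  also have "\<dots> = length (sigma ((sigma ^^ k) P6))" by (simp only: pre_sk)
  also have "\<dots> = sk (Suc k)" by (simp add: sk_def)
  finally show ?thesis by simp
qed

lemma u_W: "\<exists>r. u k = W k @ r"
proof (induction k)
  case 0 then show ?case by (simp add: W_def)
next
  case (Suc k)
  then obtain r where "u k = W k @ r" by blast
  then have "u (Suc k) = W (Suc k) @ (sigma r @ [La])" by (simp add: W_def)
  then show ?case by blast
qed

lemma take_u: "take (t k) (u k) = W k"
  using u_W[of k] by (auto simp: t_def)

lemma t_le_u: "t k \<le> length (u k)"
  using u_W[of k] by (auto simp: t_def)

lemma map_drop: "map trib_word [a..<a+n] = map trib_word [b..<b+n] \<Longrightarrow> i < n \<Longrightarrow> trib_word (a+i) = trib_word (b+i)"
  by (metis add_diff_cancel_left' nth_map_upt add_less_cancel_left)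



lemma MLem:
  "p \<ge> 1 \<Longrightarrow> PER s (s+l-p) p \<Longrightarrow> l + 1 \<ge> 3*p \<Longrightarrow> trib_word (s+l-p) \<noteq> trib_word (s+l)
   \<Longrightarrow> (s = 0 \<or> trib_word (s-1) \<noteq> trib_word (s-1+p))
   \<Longrightarrow> \<exists>k. p = t k \<and> l = length (u k) \<and> map trib_word [s..<s+l] = u k \<and> sk k \<le> s"
proof (induction p arbitrary: s l rule: less_induct)
  case (less p)
  note per = less.prems(2) and lb = less.prems(3) and rm = less.prems(4) and lm = less.prems(5)
  show ?case
  proof (cases "p = 1")
    case True
    have e1: "trib_word s = trib_word (s+1)" using PER_D[OF per, of s] lb True by simp
    then have sa: "trib_word s = La" using L1[of s] by auto
    have l2: "l = 2"
    proof (rule ccontr)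
      assume "l \<noteq> 2"
      then have "l \<ge> 3" using lb True by simp
      then have "trib_word (s+1) = trib_word (s+2)" using PER_D[OF per, of "s+1"] True by (simp add: add.assoc)
      then show False using L2[of s] e1 sa by simp
    qed
    have s6: "sk 0 \<le> s"
    proof (rule ccontr)
      assume "\<not> sk 0 \<le> s"
      then have "s < 6" by (simp add: sk_def P6_def)
      then have "s \<in> {0,1,2,3,4,5}" by auto
      then show False using e1 sa tw_vals by auto
    qed
    have "map trib_word [s..<s+l] = u 0" using l2 sa e1 by (simp add: upt_rec)
    then show ?thesis using True l2 s6 by (intro exI[of _ 0]) (simp add: t_0)
  next
    case False
    then have p2: "p \<ge> 2" using less.prems(1) by simp
    define D where "D = s + l - p"
    have D1: "D \<ge> s + 2*p - 1" using lb p2 unfolding D_def by arith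
    have D2: "s + l = D + p" using lb p2 unfolding D_def by arith
    have perD: "PER s D p" using per by (simp add: D_def)
    have "trib_word D \<noteq> trib_word (s+l)" using rm by (simp only: D_def[symmetric] not_False_eq_True)
    then have rmD: "trib_word D \<noteq> trib_word (D+p)" by (simp only: D2 not_False_eq_True)
    have sa: "trib_word s = La"
    proof (rule ccontr)
      assume na: "trib_word s \<noteq> La"
      then have s0: "s > 0" "trib_word (s-1) = La" using L1[of s] by auto
      have "trib_word s = trib_word (s+p)" using PER_D[OF perD, of s] D1 p2 by simp
      then have "trib_word (s+p) \<noteq> La" using na by simp
      then have "trib_word (s+p-1) = La" using L1[of "s+p"] by simp
      moreover have "s - 1 + p = s + p - 1" using s0 by simp
      ultimately show False using lm s0 by simp
    qed
    obtain m0 where m0: "s = pos m0" using sa isa by blast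
    have "trib_word (s+p) = La" using PER_D[OF perD, of s] D1 p2 sa by simp
    then obtain m1 where m1: "s + p = pos m1" using isa by blast
    have "pos m0 < pos m1" using m0 m1 p2 by simp
    then have lt: "m0 < m1" using pos_less_iff by blast
    define q where "q = m1 - m0"
    have g0: "pos (m0+q) = pos m0 + p" using lt m0 m1 by (simp add: q_def)
    have q1: "q \<ge> 1" using lt by (simp add: q_def)
    have qp: "q < p" using q_less_p[OF g0 q1 p2] .
    have perP: "PER (pos m0) D p" using perD m0 by simp
    have Gm: "pos (m+q) = pos m + p" if "m0 \<le> m" "pos m < D" for m
      using G[OF perP g0 that] .
    have Eq: "trib_word m = trib_word (m+q)" if "m0 \<le> m" "pos m + 1 < D" for m
      using Gstep[OF perP that(1) Gm[OF that(1)] that(2)] that by simp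
    obtain e where e: "pos e \<le> D - 1" "D - 1 < pos (Suc e)" using block by blast
    have eD: "pos e < D" "D \<le> pos (Suc e)" using e D1 p2 by auto
    have me: "m0 \<le> e"
    proof (rule ccontr)
      assume "\<not> m0 \<le> e"
      then have "pos (Suc e) \<le> pos m0" using pos_mono by simp
      then show False using eD m0 D1 p2 by simp
    qed
    have Ge: "pos (e+q) = pos e + p" using Gm[OF me eD(1)] .
    have neq: "trib_word e \<noteq> trib_word (e+q)"
    proof
      assume eq: "trib_word e = trib_word (e+q)"
      have GS: "pos (Suc e + q) = pos (Suc e) + p" using Ge eq by (simp add: pos_Suc)
      show False
      proof (cases "D < pos (Suc e)")
        case True
        define i where "i = D - pos e"
        have il: "i < length (sig (trib_word e))" using True eD by (simp add: i_def pos_Suc)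
        have "trib_word D = sig (trib_word e) ! i" using P1[OF il] eD by (simp add: i_def)
        moreover have "trib_word (D+p) = sig (trib_word (e+q)) ! i"
        proof -
          have "D + p = pos (e+q) + i" using Ge eD by (simp add: i_def)
          then show ?thesis using P1[of i "e+q"] il eq by simp
        qed
        ultimately show False using rmD eq by simp
      next
        case False
        then have "D = pos (Suc e)" using eD by simp
        then show False using rmD GS tw_pos[of "Suc e"] tw_pos[of "Suc e + q"] by simp
      qed
    qed
    have De: "D = pos e + 1"
    proof (rule ccontr)
      assume "D \<noteq> pos e + 1"
      then have "pos e + 1 < D" using eD by simp
      then have "trib_word e = trib_word (e+q)" using Eq[OF me] by simp
      then show False using neq by simp
    qed
    have e2: "e + 1 \<ge> m0 + 2*q"
    proof (rule ccontr)
      assume "\<not> e + 1 \<ge> m0 + 2*q"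
      then have le: "e + 2 \<le> m0 + q + q" by simp
      have "pos (m0 + q) < D" using g0 m0 D1 p2 by simp
      then have "pos (m0 + q + q) = pos (m0+q) + p" using Gm[of "m0+q"] by simp
      then have "pos (m0+q+q) = s + 2*p" using g0 m0 by simp
      moreover have "pos (e+2) \<le> pos (m0+q+q)" using pos_mono le by blast
      moreover have "pos (e+2) \<ge> pos e + 3" by (rule pos_Suc2)
      ultimately show False using De D1 by simp
    qed
    define L where "L = e + q - m0"
    have L3: "L + 1 \<ge> 3*q" using e2 by (simp add: L_def)
    have LL: "m0 + L - q = e" "m0 + L = e + q" using me by (simp_all add: L_def)
    have perQ: "PER m0 (m0+L-q) q"
      unfolding PER_def LL(1)
    proof (intro allI impI)
      fix m assume "m0 \<le> m" "m < e"
      moreover have "pos m + 1 \<le> pos e" using \<open>m < e\<close> pos_smono by (simp add: Suc_le_eq)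
      ultimately show "trib_word m = trib_word (m + q)" using Eq De by simp
    qed
    have rmQ: "trib_word (m0+L-q) \<noteq> trib_word (m0+L)" using neq LL by simp
    have lmQ: "m0 = 0 \<or> trib_word (m0-1) \<noteq> trib_word (m0-1+q)"
    proof (rule ccontr)
      assume "\<not> (m0 = 0 \<or> trib_word (m0-1) \<noteq> trib_word (m0-1+q))"
      then have m00: "m0 > 0" and eqq: "trib_word (m0-1) = trib_word (m0-1+q)" by auto
      have "s > 0" using m0 pos_smono[OF m00] by simp
      then have ne: "trib_word (s-1) \<noteq> trib_word (s-1+p)" using lm by simp
      have a1: "trib_word (pos (Suc (m0-1)) - 1) = last (sig (trib_word (m0-1)))" by (rule lastletter)
      have a2: "trib_word (pos (Suc (m0-1+q)) - 1) = last (sig (trib_word (m0-1+q)))" by (rule lastletter)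
      have "Suc (m0-1) = m0" "Suc (m0-1+q) = m0+q" using m00 by auto
      then have "trib_word (s-1) = trib_word (s+p-1)" using a1 a2 eqq g0 m0 by simp
      then show False using ne \<open>s > 0\<close> by (simp add: add.commute)
    qed
    obtain k where k: "q = t k" "L = length (u k)" "map trib_word [m0..<m0+L] = u k" "sk k \<le> m0"
      using less.IH[OF qp q1 perQ L3 rmQ lmQ] by blast
    have sl: "s + l = pos (m0+L) + 1" using D2 De Ge LL by simp
    have "map trib_word [s..<s+l] = map trib_word [pos m0..<pos (m0+L)] @ [trib_word (pos (m0+L))]"
      using sl m0 pos_mono[of m0 "m0+L"] by simp
    also have "\<dots> = sigma (u k) @ [La]" using SEG[of m0 "m0+L"] k(3) tw_pos by simp
    finally have w: "map trib_word [s..<s+l] = u (Suc k)" by simp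
    have "map trib_word [m0..<m0+q] = take q (map trib_word [m0..<m0+L])"
      using LL me by (simp add: take_map)
    then have "map trib_word [m0..<m0+q] = W k" using k take_u by simp
    then have "pos (m0+q) - pos m0 = length (sigma (W k))" using SEG[of m0 "m0+q"]
      by (metis le_add1 length_map length_upt)
    then have pt: "p = t (Suc k)" using g0 by (simp add: t_def W_def)
    have "l = length (u (Suc k))" using w by (metis length_map length_upt add_diff_cancel_left')
    moreover have "sk (Suc k) \<le> s" using k(4) sk_Suc pos_mono m0 by simp
    ultimately show ?thesis using w pt by blast
  qed
qed



lemma FWD:
  assumes per: "PER m0 (m0+L-q) q" and qL: "q \<le> L"
  defines "p \<equiv> pos (m0+q) - pos m0"
  shows "pos (m0+L) = pos (m0+L-q) + p \<and> PER (pos m0) (pos (m0+L-q) + 1) p"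
proof -
  have g0: "pos (m0+q) = pos m0 + p" using pos_mono[of m0 "m0+q"] by (simp add: p_def)
  have Gf: "pos (m+q) = pos m + p" if "m0 \<le> m" "m \<le> m0+L-q" for m
    using that
  proof (induction m rule: dec_induct)
    case base then show ?case using g0 by simp
  next
    case (step n)
    have nb: "n < m0+L-q" using step.prems by simp
    have "trib_word n = trib_word (n+q)" using PER_D[OF per step.hyps(1)] nb by simp
    moreover have "pos (n+q) = pos n + p" using step.IH nb by simp
    ultimately show ?case by (simp add: pos_Suc)
  qed
  have e1: "pos (m0+L) = pos (m0+L-q) + p" using Gf[of "m0+L-q"] qL by simp
  have "PER (pos m0) (pos (m0+L-q) + 1) p"
    unfolding PER_def
  proof (intro allI impI)
    fix i assume i1: "pos m0 \<le> i" and i2: "i < pos (m0+L-q) + 1"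
    show "trib_word i = trib_word (i + p)"
    proof (cases "i = pos (m0+L-q)")
      case True
      then have "i + p = pos (m0+L)" using e1 by simp
      then show ?thesis using True tw_pos by metis
    next
      case False
      then have i3: "i < pos (m0+L-q)" using i2 by simp
      obtain m where m: "pos m \<le> i" "i < pos (Suc m)" using block by blast
      have mm0: "m0 \<le> m"
      proof (rule ccontr)
        assume "\<not> m0 \<le> m"
        then have "pos (Suc m) \<le> pos m0" using pos_mono by simp
        then show False using i1 m by simp
      qed
      have mm1: "m < m0+L-q"
      proof (rule ccontr)
        assume "\<not> m < m0+L-q"
        then have "pos (m0+L-q) \<le> pos m" using pos_mono by simp
        then show False using i3 m by simp
      qed
      define oo where "oo = i - pos m"
      have ol: "oo < length (sig (trib_word m))" using m by (simp add: oo_def pos_Suc)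
      have eq: "trib_word m = trib_word (m+q)" using PER_D[OF per mm0] mm1 by simp
      have "trib_word i = sig (trib_word m) ! oo" using P1[OF ol] m by (simp add: oo_def)
      moreover have "i + p = pos (m+q) + oo" using Gf[OF mm0] mm1 m by (simp add: oo_def)
      moreover have "trib_word (pos (m+q) + oo) = sig (trib_word (m+q)) ! oo" using P1[of oo "m+q"] ol eq by simp
      ultimately show ?thesis using eq by simp
    qed
  qed
  with e1 show ?thesis by simp
qed

lemma EXIST: "PER (sk k) (sk k + length (u k) - t k) (t k) \<and> map trib_word [sk k..<sk k + length (u k)] = u k"
proof (induction k)
  case 0
  have "sk 0 = 6" by (simp add: sk_def P6_def)
  moreover have "t 0 = 1" by (rule t_0)
  moreover have "PER 6 7 1" unfolding PER_def
  proof (intro allI impI)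
    fix i :: nat assume "6 \<le> i" "i < 7"
    then have "i = 6" by simp
    then show "trib_word i = trib_word (i + 1)" using tw_vals by simp
  qed
  moreover have "map trib_word [6..<8] = [trib_word 6, trib_word 7]" by (simp add: upt_rec)
  ultimately show ?case using tw_vals by simp
next
  case (Suc k)
  define s where "s = sk k"
  define L where "L = length (u k)"
  have per: "PER s (s+L-t k) (t k)" and w: "map trib_word [s..<s+L] = u k" using Suc by (simp_all add: s_def L_def)
  have tL: "t k \<le> L" using t_le_u by (simp add: L_def)
  have "map trib_word [s..<s+t k] = take (t k) (map trib_word [s..<s+L])"
    using tL by (simp add: take_map)
  then have "map trib_word [s..<s+t k] = W k" using w take_u by simp
  then have "pos (s+t k) - pos s = length (sigma (W k))" using SEG[of s "s+t k"]
    by (metis le_add1 length_map length_upt)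
  then have pt: "pos (s+t k) - pos s = t (Suc k)" by (simp add: t_def W_def)
  have F: "pos (s+L) = pos (s+L-t k) + t (Suc k) \<and> PER (pos s) (pos (s+L-t k) + 1) (t (Suc k))"
    using FWD[OF per tL] pt by simp
  have sS: "sk (Suc k) = pos s" using sk_Suc by (simp add: s_def)
  have "map trib_word [pos s..<pos (s+L)] = sigma (u k)" using SEG[of s "s+L"] w by simp
  then have "length (sigma (u k)) = pos (s+L) - pos s" by (metis length_map length_upt)
  then have lu: "length (u (Suc k)) = pos (s+L) - pos s + 1" by simp
  have pm: "pos s \<le> pos (s+L)" using pos_mono by simp
  have w2: "map trib_word [pos s..<pos (s+L) + 1] = u (Suc k)"
    using SEG[of s "s+L"] w pm tw_pos[of "s+L"] by simp
  have "sk (Suc k) + length (u (Suc k)) - t (Suc k) = pos (s+L-t k) + 1" using lu sS F pm by simp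
  moreover have "sk (Suc k) + length (u (Suc k)) = pos (s+L) + 1" using lu sS pm by simp
  ultimately show ?case using F w2 sS by simp
qed

lemma EXT:
  assumes per: "PER j (j+L-p) p" and p1: "p \<ge> 1" and L3: "L + 1 \<ge> 3*p"
  shows "\<exists>k s. p = t k \<and> s \<le> j \<and> j + L \<le> s + length (u k) \<and> sk k \<le> s \<and> map trib_word [s..<s + length (u k)] = u k"
proof -
  have ex: "\<exists>d. j \<le> d \<and> trib_word d \<noteq> trib_word (d+p)" using AP[OF p1, of j] by blast
  define D where "D = (LEAST d. j \<le> d \<and> trib_word d \<noteq> trib_word (d+p))"
  have D: "j \<le> D" "trib_word D \<noteq> trib_word (D+p)"
    using LeastI_ex[OF ex] unfolding D_def by auto
  have Dmin: "trib_word i = trib_word (i+p)" if "j \<le> i" "i < D" for i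
    using not_less_Least[of i "\<lambda>d. j \<le> d \<and> trib_word d \<noteq> trib_word (d+p)"] that unfolding D_def by auto
  have DL: "j + L - p \<le> D"
  proof (rule ccontr)
    assume "\<not> j + L - p \<le> D"
    then show False using PER_D[OF per D(1)] D(2) by simp
  qed
  define Q where "Q = (\<lambda>s'. s' \<le> j \<and> (\<forall>i. s' \<le> i \<longrightarrow> i < j \<longrightarrow> trib_word i = trib_word (i+p)))"
  have Qj: "Q j" by (simp add: Q_def)
  define s where "s = (LEAST s'. Q s')"
  have Qs: "Q s" using LeastI[of Q, OF Qj] by (simp add: s_def)
  have sj: "s \<le> j" using Qs by (simp add: Q_def)
  have perS: "PER s D p" unfolding PER_def
  proof (intro allI impI)
    fix i assume "s \<le> i" "i < D"
    then show "trib_word i = trib_word (i + p)"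
      using Qs Dmin by (cases "i < j") (auto simp: Q_def)
  qed
  have lm: "s = 0 \<or> trib_word (s-1) \<noteq> trib_word (s-1+p)"
  proof (rule ccontr)
    assume "\<not> (s = 0 \<or> trib_word (s-1) \<noteq> trib_word (s-1+p))"
    then have s0: "s > 0" and eq: "trib_word (s-1) = trib_word (s-1+p)" by auto
    have "Q (s-1)" unfolding Q_def
    proof (intro conjI allI impI)
      show "s - 1 \<le> j" using sj by simp
      fix i assume "s - 1 \<le> i" "i < j"
      then show "trib_word i = trib_word (i + p)"
        using Qs eq by (cases "i = s - 1") (auto simp: Q_def)
    qed
    moreover have "s - 1 < s" using s0 by simp
    ultimately show False using not_less_Least[of "s-1" Q] by (simp add: s_def)
  qed
  define l where "l = D + p - s"
  have sD: "s \<le> D" using sj D(1) by simp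
  have e1: "s + l - p = D" "s + l = D + p" using sD by (simp_all add: l_def)
  have lb: "l + 1 \<ge> 3*p" using DL L3 sj sD by (simp add: l_def)
  have "\<exists>k. p = t k \<and> l = length (u k) \<and> map trib_word [s..<s+l] = u k \<and> sk k \<le> s"
    using MLem[OF p1 _ lb _ lm] perS D(2) e1 by simp
  then obtain k where k: "p = t k" "l = length (u k)" "map trib_word [s..<s+l] = u k" "sk k \<le> s" by blast
  have "j + L \<le> s + l" using DL e1 sj by simp
  then show ?thesis using k sj by blast
qed



fun tt :: "nat \<Rightarrow> nat" where
  "tt 0 = 0"
| "tt (Suc 0) = 0"
| "tt (Suc (Suc 0)) = 1"
| "tt (Suc (Suc (Suc n))) = tt (Suc (Suc n)) + tt (Suc n) + tt n"

lemma tt_rec: "tt (n+3) = tt (n+2) + tt (n+1) + tt n"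
  by (simp add: numeral_eq_Suc)

lemma tt_exp: "tt (k+3) = tt k + tt (k+1) + tt (k+2)"
  "tt (k+4) = tt k + 2*tt (k+1) + 2*tt (k+2)"
  "tt (k+5) = 2*tt k + 3*tt (k+1) + 4*tt (k+2)"
  "tt (k+6) = 4*tt k + 6*tt (k+1) + 7*tt (k+2)"
  "tt (k+7) = 7*tt k + 11*tt (k+1) + 13*tt (k+2)"
  by (simp_all add: eval_nat_numeral)

lemma tt_Suc_mono: "tt n \<le> tt (Suc n)"
proof (induction n rule: tt.induct)
  case (4 n) then show ?case by simp
qed simp_all

lemma tt_mono: "m \<le> n \<Longrightarrow> tt m \<le> tt n"
  by (induction n rule: dec_induct) (auto intro: order.trans tt_Suc_mono)

lemma tt_pos: "n \<ge> 2 \<Longrightarrow> tt n \<ge> 1"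
  using tt_mono[of 2 n] by (simp add: numeral_eq_Suc)

lemma tt_gap: "tt (k+2) \<ge> tt k + 1"
proof (cases k)
  case 0 then show ?thesis by (simp add: numeral_eq_Suc)
next
  case (Suc j)
  have "tt (j+3) = tt (j+2) + tt (j+1) + tt j" by (rule tt_rec)
  moreover have "tt (j+2) \<ge> 1" using tt_pos by simp
  ultimately show ?thesis using Suc by (simp add: numeral_eq_Suc)
qed

lemma t_tt: "t k = tt (k+3)"
proof (induction k rule: less_induct)
  case (less k)
  show ?case
  proof (cases "k \<ge> 3")
    case True
    then obtain n where n: "k = n + 3" by (metis le_add_diff_inverse2)
    have "t k = t (n+2) + t (n+1) + t n" using t_rec n by simp
    also have "\<dots> = tt (n+5) + tt (n+4) + tt (n+3)" using less n by (simp add: eval_nat_numeral)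
    also have "\<dots> = tt (k+3)" using n by (simp add: eval_nat_numeral)
    finally show ?thesis .
  next
    case False
    then have "k = 0 \<or> k = 1 \<or> k = 2" by auto
    then show ?thesis using t_0 t_1 t_2 by (auto simp: numeral_eq_Suc)
  qed
qed

lemma len_sigma: "length (sigma w) = length w + count_list w La + count_list w Lb"
  by (induction w) (auto split: letter.splits, (case_tac a; simp)+)

lemma cnt_a: "count_list (sigma w) La = length w"
  by (induction w) (auto split: letter.splits, (case_tac a; simp)+)

lemma cnt_b: "count_list (sigma w) Lb = count_list w La"
  by (induction w) (auto split: letter.splits, (case_tac a; simp)+)

definition ul :: "nat \<Rightarrow> nat" where "ul k = length (u k)"
definition ca :: "nat \<Rightarrow> nat" where "ca k = count_list (u k) La"
definition cb :: "nat \<Rightarrow> nat" where "cb k = count_list (u k) Lb"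

lemma ul_Suc: "ul (Suc k) = ul k + ca k + cb k + 1"
  by (simp add: ul_def ca_def cb_def len_sigma)
lemma ca_Suc: "ca (Suc k) = ul k + 1"
  by (simp add: ul_def ca_def cnt_a)
lemma cb_Suc: "cb (Suc k) = ca k"
  by (simp add: ca_def cb_def cnt_b)

lemma ul_rec: "ul (k+3) = ul (k+2) + ul (k+1) + ul k + 3"
  by (simp add: eval_nat_numeral ul_Suc ca_Suc cb_Suc)

lemma ul_small: "ul 0 = 2" "ul 1 = 5" "ul 2 = 11"
  by (simp_all add: ul_def sigma_def numeral_eq_Suc)

lemma ul_tt: "2 * ul k + 3 = tt (k+6) + tt k"
proof (induction k rule: less_induct)
  case (less k)
  show ?case
  proof (cases "k \<ge> 3")
    case True
    then obtain n where n: "k = n + 3" by (metis le_add_diff_inverse2)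
    have "2 * ul k + 3 = 2 * ul (n+2) + 3 + (2 * ul (n+1) + 3) + (2 * ul n + 3)"
      using ul_rec[of n] n by simp
    also have "\<dots> = tt (n+8) + tt (n+2) + (tt (n+7) + tt (n+1)) + (tt (n+6) + tt n)"
      using less n by (simp add: eval_nat_numeral)
    also have "\<dots> = tt (k+6) + tt k" using n by (simp add: eval_nat_numeral)
    finally show ?thesis .
  next
    case False
    then have "k = 0 \<or> k = 1 \<or> k = 2" by auto
    then show ?thesis using ul_small by (auto simp: eval_nat_numeral)
  qed
qed

definition ee :: "nat \<Rightarrow> nat" where "ee k = ul k + 1 - 3 * t k"

lemma ee_tt: "3 * t k \<le> ul k + 1" "2 * ee k + 1 + tt k = tt (k+2)"
proof -
  have a: "2 * ul k + 3 = tt (k+6) + tt k" by (rule ul_tt)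
  have b: "t k = tt (k+3)" by (rule t_tt)
  have g: "tt (k+2) \<ge> tt k + 1" by (rule tt_gap)
  show "3 * t k \<le> ul k + 1" using a b g tt_exp[of k] by simp
  then show "2 * ee k + 1 + tt k = tt (k+2)" using a b g tt_exp[of k] by (simp add: ee_def)
qed

lemma sigmap_W: "(sigma ^^ k) (W j) = W (k + j)"
  by (simp add: W_def funpow_add)

lemma sk_tt: "sk k = tt (k+5) + tt (k+4)"
proof -
  have P: "P6 = W 2 @ W 1" by (simp add: P6_def W_def numeral_eq_Suc)
  have "(sigma ^^ k) P6 = (sigma ^^ k) (W 2) @ (sigma ^^ k) (W 1)" unfolding P by (rule sigmap_append)
  also have "\<dots> = W (k+2) @ W (k+1)" by (simp only: sigmap_W)
  finally have "(sigma ^^ k) P6 = W (k+2) @ W (k+1)" .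
  then have "sk k = t (k+2) + t (k+1)" by (simp add: sk_def t_def)
  then show ?thesis using t_tt[of "k+2"] t_tt[of "k+1"] by (simp add: eval_nat_numeral)
qed

definition FF :: "nat \<Rightarrow> nat" where "FF k = sk k + 3 * t k"

lemma FF_tt: "FF k = 6 * tt k + 8 * tt (k+1) + 9 * tt (k+2)"
  using sk_tt[of k] t_tt[of k] tt_exp[of k] by (simp add: FF_def)

lemma FF_Suc: "FF (Suc k) = 9 * tt k + 15 * tt (k+1) + 17 * tt (k+2)"
proof -
  have "FF (Suc k) = 6 * tt (k+1) + 8 * tt (k+2) + 9 * tt (k+3)" using FF_tt[of "Suc k"] by (simp add: eval_nat_numeral)
  then show ?thesis using tt_exp(1)[of k] by simp
qed

lemma FF_step: "FF k + ee k \<le> FF (Suc k)" "FF k < FF (Suc k)"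
proof -
  have "2 * ee k + 1 + tt k = tt (k+2)" by (rule ee_tt)
  then show "FF k + ee k \<le> FF (Suc k)" "FF k < FF (Suc k)" using FF_tt[of k] FF_Suc[of k] tt_gap[of k] by simp_all
qed

lemma FF_mono: "j < k \<Longrightarrow> FF j < FF k"
  by (induction k) (auto simp: less_Suc_eq intro: less_trans FF_step(2))

lemma FF_mono_le: "j \<le> k \<Longrightarrow> FF j \<le> FF k"
  using FF_mono[of j k] by (cases "j = k") auto

lemma FF3: "FF 3 = 58"
  using FF_tt[of 3] by (simp add: eval_nat_numeral)

lemma ee_small: "k < 3 \<Longrightarrow> ee k = 0"
proof -
  assume "k < 3"
  then have "k = 0 \<or> k = 1 \<or> k = 2" by auto
  then show ?thesis using ul_small t_0 t_1 t_2 by (auto simp: ee_def)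
qed

lemma ul_mono: "j \<le> k \<Longrightarrow> ul j \<le> ul k"
  by (induction k rule: dec_induct) (auto simp: ul_Suc)

lemma ul_bound: "j < k \<Longrightarrow> ul j < 3 * t k"
proof -
  assume jk: "j < k"
  then obtain K where K: "k = Suc K" by (cases k) auto
  have "ul j \<le> ul K" using jk K ul_mono by simp
  moreover have "2 * ul K + 3 = tt (K+6) + tt K" by (rule ul_tt)
  moreover have "t k = tt (K+4)" using t_tt[of k] K by (simp add: eval_nat_numeral)
  moreover have "tt K \<le> tt (K+1)" "tt (K+1) \<le> tt (K+2)" using tt_mono by auto
  ultimately show ?thesis using tt_exp[of K] by simp
qed



lemma PER_map: "PER a (a+n) p \<longleftrightarrow> map trib_word [a..<a+n] = map trib_word [a+p..<a+p+n]"
proof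
  assume "PER a (a+n) p"
  note h = this
  show "map trib_word [a..<a+n] = map trib_word [a+p..<a+p+n]"
  proof (rule nth_equalityI)
    show "length (map trib_word [a..<a+n]) = length (map trib_word [a+p..<a+p+n])" by simp
    fix i assume "i < length (map trib_word [a..<a+n])"
    then have i: "i < n" by simp
    have "trib_word (a+i) = trib_word (a+i+p)" using PER_D[OF h, of "a+i"] i by simp
    moreover have "map trib_word [a..<a+n] ! i = trib_word (a+i)" using i by (subst nth_map_upt) auto
    moreover have "map trib_word [a+p..<a+p+n] ! i = trib_word (a+p+i)" using i by (subst nth_map_upt) auto
    moreover have "a+p+i = a+i+p" by simp
    ultimately show "map trib_word [a..<a+n] ! i = map trib_word [a+p..<a+p+n] ! i" by simp
  qed
next
  assume h: "map trib_word [a..<a+n] = map trib_word [a+p..<a+p+n]"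
  show "PER a (a+n) p" unfolding PER_def
  proof (intro allI impI)
    fix i assume "a \<le> i" "i < a + n"
    then have "trib_word (a + (i-a)) = trib_word (a + p + (i - a))" using map_drop[OF h, of "i-a"] by simp
    then show "trib_word i = trib_word (i+p)" using \<open>a \<le> i\<close> by (simp add: add.commute add.left_commute)
  qed
qed

lemma map_split: "map trib_word [a..<a+m+n] = map trib_word [a..<a+m] @ map trib_word [a+m..<a+m+n]"
  by (metis le_add1 map_append upt_add_eq_append)

lemma sublist_iff: "sublist v (map trib_word [0..<n]) \<longleftrightarrow> (\<exists>j. j + length v \<le> n \<and> v = map trib_word [j..<j+length v])"
proof
  assume "sublist v (map trib_word [0..<n])"
  then obtain ps ss where e: "map trib_word [0..<n] = ps @ v @ ss" by (auto simp: sublist_def)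
  define j where "j = length ps"
  have len: "j + length v \<le> n" using arg_cong[OF e, of length] by (simp add: j_def)
  have "v = take (length v) (drop j (map trib_word [0..<n]))" using e by (simp add: j_def)
  also have "\<dots> = map trib_word [j..<j+length v]" using len by (simp add: drop_map take_map)
  finally show "\<exists>j. j + length v \<le> n \<and> v = map trib_word [j..<j+length v]" using len by blast
next
  assume "\<exists>j. j + length v \<le> n \<and> v = map trib_word [j..<j+length v]"
  then obtain j where j: "j + length v \<le> n" "v = map trib_word [j..<j+length v]" by blast
  have e1: "[0..<n] = [0..<j] @ [j..<n]" using upt_add_eq_append[of 0 j "n-j"] j(1) by simp
  have e2: "[j..<n] = [j..<j+length v] @ [j+length v..<n]"
    using upt_add_eq_append[of j "j+length v" "n - (j+length v)"] j(1) by simp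
  have "map trib_word [0..<n] = map trib_word [0..<j] @ v @ map trib_word [j+length v..<n]"
    using e1 e2 j(2) by simp
  then show "sublist v (map trib_word [0..<n])" unfolding sublist_def by blast
qed

lemma upt_split: "i \<le> m \<Longrightarrow> m \<le> n \<Longrightarrow> [i..<n] = [i..<m] @ [m..<n]"
  by (metis le_add_diff_inverse upt_add_eq_append)

lemma three_split:
  fixes j p :: nat
  defines "M0 \<equiv> map trib_word [j..<j+p]" and "M1 \<equiv> map trib_word [j+p..<j+2*p]" and "M2 \<equiv> map trib_word [j+2*p..<j+3*p]"
  shows "map trib_word [j..<j+3*p] = M0 @ M1 @ M2"
    "map trib_word [j..<j+2*p] = M0 @ M1"
    "map trib_word [j+p..<j+p+2*p] = M1 @ M2"
    "length M0 = p" "length M1 = p" "length M2 = p"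
proof -
  have a: "[j..<j+3*p] = [j..<j+p] @ [j+p..<j+3*p]" by (rule upt_split) auto
  have b: "[j+p..<j+3*p] = [j+p..<j+2*p] @ [j+2*p..<j+3*p]" by (rule upt_split) auto
  have c: "[j..<j+2*p] = [j..<j+p] @ [j+p..<j+2*p]" by (rule upt_split) auto
  have d: "j+p+2*p = j+3*p" by simp
  show "map trib_word [j..<j+3*p] = M0 @ M1 @ M2" unfolding M0_def M1_def M2_def a b by simp
  show "map trib_word [j..<j+2*p] = M0 @ M1" unfolding M0_def M1_def c by simp
  show "map trib_word [j+p..<j+p+2*p] = M1 @ M2" unfolding M1_def M2_def d b by simp
  show "length M0 = p" "length M1 = p" "length M2 = p" by (simp_all add: M0_def M1_def M2_def)
qed

lemma cube_iff: "(w \<noteq> [] \<and> sublist (w@w@w) (trib_prefix n)) \<longleftrightarrow>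
   (\<exists>j p. p \<ge> 1 \<and> j + 3*p \<le> n \<and> PER j (j+2*p) p \<and> w = map trib_word [j..<j+p])"
proof
  assume h: "w \<noteq> [] \<and> sublist (w@w@w) (trib_prefix n)"
  define p where "p = length w"
  have l3: "length (w@w@w) = 3*p" by (simp add: p_def)
  obtain j where j: "j + 3*p \<le> n" "w@w@w = map trib_word [j..<j+3*p]"
    using h sublist_iff[of "w@w@w" n] unfolding trib_prefix_def l3 by blast
  note ts = three_split[of j p]
  have ws: "w = map trib_word [j..<j+p] \<and> w = map trib_word [j+p..<j+2*p] \<and> w = map trib_word [j+2*p..<j+3*p]"
    using j(2) ts(1) ts(4-6) p_def by auto
  then have "PER j (j+2*p) p" unfolding PER_map ts(2,3) by metis
  moreover have "p \<ge> 1" using h by (simp add: p_def Suc_le_eq)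
  ultimately show "\<exists>j p. p \<ge> 1 \<and> j + 3*p \<le> n \<and> PER j (j+2*p) p \<and> w = map trib_word [j..<j+p]"
    using j ws by blast
next
  assume "\<exists>j p. p \<ge> 1 \<and> j + 3*p \<le> n \<and> PER j (j+2*p) p \<and> w = map trib_word [j..<j+p]"
  then obtain j p where h: "p \<ge> 1" "j + 3*p \<le> n" "PER j (j+2*p) p" "w = map trib_word [j..<j+p]" by blast
  note ts = three_split[of j p]
  have lw: "length w = p" using h(4) by simp
  have m2: "map trib_word [j..<j+2*p] = map trib_word [j+p..<j+p+2*p]" using h(3) by (simp only: PER_map)
  then have "map trib_word [j..<j+p] @ map trib_word [j+p..<j+2*p] = map trib_word [j+p..<j+2*p] @ map trib_word [j+2*p..<j+3*p]"
    unfolding ts(2,3) .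
  then have e: "map trib_word [j..<j+p] = map trib_word [j+p..<j+2*p]" "map trib_word [j+p..<j+2*p] = map trib_word [j+2*p..<j+3*p]"
    using ts(4-6) by (simp_all add: append_eq_append_conv)
  have l3: "length (w@w@w) = 3*p" using lw by simp
  have "w@w@w = map trib_word [j..<j+length (w@w@w)]" unfolding l3 ts(1) using e h(4) by simp
  moreover have "j + length (w@w@w) \<le> n" using l3 h(2) by simp
  ultimately have "sublist (w@w@w) (trib_prefix n)" unfolding trib_prefix_def using sublist_iff by blast
  moreover have "w \<noteq> []" using lw h(1) by auto
  ultimately show "w \<noteq> [] \<and> sublist (w@w@w) (trib_prefix n)" by simp
qed



definition II :: "nat \<Rightarrow> (nat \<times> nat) set" where
  "II n = {(k,d). d < ee k \<and> FF k + d \<le> n}"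

definition R :: "nat \<times> nat \<Rightarrow> letter list" where
  "R kd = (case kd of (k,d) \<Rightarrow> map trib_word [sk k + d..<sk k + d + t k])"

lemma win:
  assumes h: "map trib_word [a..<a+N] = map trib_word [b..<b+N]" and dP: "d + P \<le> N"
  shows "map trib_word [a+d..<a+d+P] = map trib_word [b+d..<b+d+P]"
proof (rule nth_equalityI)
  show "length (map trib_word [a+d..<a+d+P]) = length (map trib_word [b+d..<b+d+P])" by simp
  fix i assume "i < length (map trib_word [a+d..<a+d+P])"
  then have i: "i < P" by simp
  have "trib_word (a + (d+i)) = trib_word (b + (d+i))" using map_drop[OF h, of "d+i"] i dP by simp
  moreover have "map trib_word [a+d..<a+d+P] ! i = trib_word (a + (d+i))" using i by (subst nth_map_upt) (auto simp: add.assoc)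
  moreover have "map trib_word [b+d..<b+d+P] ! i = trib_word (b + (d+i))" using i by (subst nth_map_upt) (auto simp: add.assoc)
  ultimately show "map trib_word [a+d..<a+d+P] ! i = map trib_word [b+d..<b+d+P] ! i" by simp
qed

lemma ee_iff: "d < ee k \<longleftrightarrow> d + 3 * t k \<le> ul k"
  using ee_tt(1)[of k] by (auto simp: ee_def)

lemma cubes_eq: "{w. w \<noteq> [] \<and> sublist (w@w@w) (trib_prefix n)} = R ` II n"
proof
  show "{w. w \<noteq> [] \<and> sublist (w@w@w) (trib_prefix n)} \<subseteq> R ` II n"
  proof
    fix w assume "w \<in> {w. w \<noteq> [] \<and> sublist (w@w@w) (trib_prefix n)}"
    then obtain j p where h: "p \<ge> 1" "j + 3*p \<le> n" "PER j (j+2*p) p" "w = map trib_word [j..<j+p]"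
      using cube_iff by blast
    have "j + 3*p - p = j + 2*p" by simp
    then have per: "PER j (j + 3*p - p) p" using h(3) by (simp only:)
    obtain k s where ks: "p = t k" "s \<le> j" "j + 3*p \<le> s + length (u k)" "sk k \<le> s"
        "map trib_word [s..<s + length (u k)] = u k"
      using EXT[OF per h(1)] by auto
    define d where "d = j - s"
    have dk: "d + 3 * t k \<le> ul k" using ks by (simp add: d_def ul_def)
    have "map trib_word [s..<s + ul k] = map trib_word [sk k..<sk k + ul k]"
      using ks(5) EXIST[of k] by (simp add: ul_def)
    then have "map trib_word [s+d..<s+d+p] = map trib_word [sk k+d..<sk k+d+p]"
      by (rule win) (use dk ks(1) in simp)
    then have "w = R (k,d)" using h(4) ks(1,2) by (simp add: R_def d_def)
    moreover have "(k,d) \<in> II n" using dk ks h(2) by (simp add: II_def ee_iff FF_def d_def)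
    ultimately show "w \<in> R ` II n" by blast
  qed
next
  show "R ` II n \<subseteq> {w. w \<noteq> [] \<and> sublist (w@w@w) (trib_prefix n)}"
  proof
    fix w assume "w \<in> R ` II n"
    then obtain k d where kd: "(k,d) \<in> II n" "w = R (k,d)" by auto
    have dk: "d + 3 * t k \<le> ul k" "FF k + d \<le> n" using kd by (simp_all add: II_def ee_iff)
    have per: "PER (sk k) (sk k + ul k - t k) (t k)" using EXIST[of k] by (simp add: ul_def)
    have A: "PER (sk k + d) (sk k + d + 2 * t k) (t k)" unfolding PER_def
    proof (intro allI impI)
      fix i assume "sk k + d \<le> i" "i < sk k + d + 2 * t k"
      then show "trib_word i = trib_word (i + t k)" using PER_D[OF per, of i] dk by simp
    qed
    have B: "t k \<ge> 1" using t_ge[of k] by simp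
    have C: "sk k + d + 3 * t k \<le> n" using dk by (simp add: FF_def)
    have "w = map trib_word [sk k + d..<sk k + d + t k]" using kd(2) by (simp add: R_def)
    then have "w \<noteq> [] \<and> sublist (w@w@w) (trib_prefix n)" using cube_iff[of w n] A B C by blast
    then show "w \<in> {w. w \<noteq> [] \<and> sublist (w@w@w) (trib_prefix n)}" by simp
  qed
qed

lemma PER_mod: "PER b c p \<Longrightarrow> b \<le> x \<Longrightarrow> x + m*p < c + p \<Longrightarrow> trib_word x = trib_word (x + m*p)"
proof (induction m)
  case 0 then show ?case by simp
next
  case (Suc m)
  have "trib_word x = trib_word (x + m*p)" using Suc by simp
  also have "\<dots> = trib_word (x + m*p + p)" using PER_D[OF Suc.prems(1), of "x + m*p"] Suc.prems by simp
  finally have "trib_word x = trib_word (x + m*p + p)" .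
  moreover have eq2: "x + m*p + p = x + Suc m * p" by simp
  ultimately show ?case by (simp only:)
qed

lemma ee_lt_t: "ee k < t k"
proof -
  have "2 * ee k + 1 + tt k = tt (k+2)" by (rule ee_tt)
  moreover have "tt (k+2) \<le> tt (k+3)" by (rule tt_mono) simp
  ultimately show ?thesis using t_tt[of k] by simp
qed

lemma inj_aux:
  assumes dd: "d < d'" and d'e: "d' < ee k" and eq: "R (k,d) = R (k,d')"
  shows False
proof -
  define S where "S = sk k"
  define p where "p = t k"
  define U where "U = ul k"
  define \<delta> where "\<delta> = d' - d"
  define a where "a = S + d"
  have per: "PER S (S + U - p) p" using EXIST[of k] by (simp add: S_def U_def p_def ul_def)
  have d'U: "d' + 3*p \<le> U" using d'e ee_iff by (simp add: U_def p_def)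
  have p1: "p \<ge> 1" using t_ge[of k] by (simp add: p_def)
  have root: "trib_word (S+d+r) = trib_word (S+d'+r)" if "r < p" for r
  proof -
    have "map trib_word [S+d..<S+d+p] = map trib_word [S+d'..<S+d'+p]" using eq by (simp add: R_def S_def p_def)
    then show ?thesis using map_drop[of "S+d" p "S+d'" r] that by simp
  qed
  have perd: "PER a (a + 3*p - \<delta>) \<delta>" unfolding PER_def
  proof (intro allI impI)
    fix i assume i1: "a \<le> i" and i2: "i < a + 3*p - \<delta>"
    define r where "r = i - a"
    have ir: "i = a + r" using i1 by (simp add: r_def)
    have r3: "r + \<delta> < 3*p" using i2 i1 dd by (simp add: r_def \<delta>_def)
    have rm: "r = r mod p + (r div p) * p" by simp
    have "trib_word (S + d + r mod p) = trib_word (S + d + r mod p + (r div p) * p)"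
      by (rule PER_mod[OF per]) (use d'U dd r3 rm in \<open>simp_all\<close>)
    then have A: "trib_word i = trib_word (S + d + r mod p)" using ir rm by (simp add: a_def add.assoc)
    have "trib_word (S + d' + r mod p) = trib_word (S + d' + r mod p + (r div p) * p)"
      by (rule PER_mod[OF per]) (use d'U dd r3 rm in \<open>simp_all\<close>)
    moreover have "i + \<delta> = S + d' + r" using ir dd by (simp add: a_def \<delta>_def)
    ultimately have B: "trib_word (i + \<delta>) = trib_word (S + d' + r mod p)" using rm by (simp add: add.assoc)
    have "r mod p < p" using p1 by simp
    then show "trib_word i = trib_word (i + \<delta>)" using A B root by simp
  qed
  have \<delta>1: "\<delta> \<ge> 1" "\<delta> < p" using dd d'e ee_lt_t[of k] by (auto simp: \<delta>_def p_def)
  have L3: "3*p + 1 \<ge> 3*\<delta>" using \<delta>1 by simp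
  obtain k2 s where ks: "\<delta> = t k2" "s \<le> a" "a + 3*p \<le> s + length (u k2)"
    using EXT[OF perd \<delta>1(1) L3] by blast
  have "3*p \<le> ul k2" using ks by (simp add: ul_def)
  moreover have "k2 < k"
  proof (rule ccontr)
    assume "\<not> k2 < k"
    then have "t k \<le> t k2" using t_mono_strict[of k k2] by (cases "k = k2") auto
    then show False using ks(1) \<delta>1 by (simp add: p_def)
  qed
  ultimately show False using ul_bound[of k2 k] by (simp add: p_def)
qed

lemma t_inj: "t k = t k' \<Longrightarrow> k = k'"
  using t_mono_strict[of k k'] t_mono_strict[of k' k] by (cases k k' rule: linorder_cases) auto

lemma R_inj: "inj_on R (II n)"
proof (rule inj_onI)
  fix x y assume x: "x \<in> II n" and y: "y \<in> II n" and e: "R x = R y"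
  obtain k d where xk: "x = (k,d)" by (cases x)
  obtain k' d' where yk: "y = (k',d')" by (cases y)
  have "length (R x) = t k" "length (R y) = t k'" by (simp_all add: R_def xk yk)
  then have "t k = t k'" using e by simp
  then have kk: "k = k'" by (rule t_inj)
  have "d = d'"
  proof (cases d d' rule: linorder_cases)
    case less then show ?thesis using inj_aux[of d d' k] y e xk yk kk by (auto simp: II_def)
  next
    case greater then show ?thesis using inj_aux[of d' d k] x e xk yk kk by (auto simp: II_def)
  qed simp
  then show "x = y" using xk yk kk by simp
qed

lemma cube_count_II: "cube_count n = card (II n)"
  unfolding cube_count_def cubes_eq using card_image[OF R_inj] by simp



lemma card_II:
  assumes K1: "FF K \<le> n" and K2: "n < FF (Suc K)"
  shows "card (II n) = (\<Sum>k<K. ee k) + min (ee K) (n + 1 - FF K)"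
proof -
  have eq: "II n = Sigma {..K} (\<lambda>k. {..< min (ee k) (n + 1 - FF k)})"
  proof (intro set_eqI iffI)
    fix x assume "x \<in> II n"
    then obtain k d where x: "x = (k,d)" "d < ee k" "FF k + d \<le> n" by (auto simp: II_def)
    have "k \<le> K"
    proof (rule ccontr)
      assume "\<not> k \<le> K"
      then have "FF (Suc K) \<le> FF k" using FF_mono_le by simp
      then show False using x K2 by simp
    qed
    then show "x \<in> Sigma {..K} (\<lambda>k. {..< min (ee k) (n + 1 - FF k)})" using x by auto
  next
    fix x assume "x \<in> Sigma {..K} (\<lambda>k. {..< min (ee k) (n + 1 - FF k)})"
    then obtain k d where x: "x = (k,d)" "k \<le> K" "d < min (ee k) (n + 1 - FF k)" by auto
    have "FF k \<le> n" using FF_mono_le[OF x(2)] K1 by simp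
    then show "x \<in> II n" using x by (auto simp: II_def)
  qed
  have "card (II n) = (\<Sum>k\<le>K. min (ee k) (n + 1 - FF k))"
    unfolding eq by (subst card_SigmaI) auto
  also have "\<dots> = (\<Sum>k<K. min (ee k) (n + 1 - FF k)) + min (ee K) (n + 1 - FF K)"
    by (simp add: lessThan_Suc_atMost[symmetric])
  also have "(\<Sum>k<K. min (ee k) (n + 1 - FF k)) = (\<Sum>k<K. ee k)"
  proof (rule sum.cong)
    fix k assume "k \<in> {..<K}"
    then have "Suc k \<le> K" by simp
    then have "FF (Suc k) \<le> FF K" by (rule FF_mono_le)
    then have "FF k + ee k \<le> n" using FF_step(1)[of k] K1 by simp
    then show "min (ee k) (n + 1 - FF k) = ee k" by simp
  qed simp
  finally show ?thesis .
qed

lemma sum_ee: "2 * (\<Sum>k<K. ee k) + K = tt (K+1) + tt K"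
proof (induction K)
  case 0 then show ?case by simp
next
  case (Suc K)
  have "2 * ee K + 1 + tt K = tt (K+2)" by (rule ee_tt)
  then show ?case using Suc by (simp add: eval_nat_numeral)
qed

lemma II_small: "n \<le> 57 \<Longrightarrow> II n = {}"
proof (rule ccontr)
  assume n: "n \<le> 57" and "II n \<noteq> {}"
  then obtain k d where kd: "d < ee k" "FF k + d \<le> n" by (auto simp: II_def)
  show False
  proof (cases "k < 3")
    case True then show False using kd ee_small by simp
  next
    case False
    then have "FF 3 \<le> FF k" using FF_mono_le by simp
    then show False using FF3 kd n by simp
  qed
qed

lemma trib_tt: "trib (int k - 3) = tt k"
proof (cases "k \<ge> 3")
  case True
  then have "nat (int k - 3) = k - 3" by simp
  moreover have "tt k = t (k - 3)" using t_tt[of "k-3"] True by simp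
  ultimately show ?thesis using True by (simp add: trib_def t_def W_def)
next
  case False
  then have "k = 0 \<or> k = 1 \<or> k = 2" by auto
  then show ?thesis by (auto simp: trib_def eval_nat_numeral)
qed

lemma trib_neg: "z < -3 \<Longrightarrow> trib z = 0"
  by (simp add: trib_def)

lemma trib_m:
  assumes "m = int K + 4" "0 \<le> c" "c \<le> 7"
  shows "trib (m - c) = tt (K + 7 - nat c)"
proof -
  have "m - c = int (K + 7 - nat c) - 3" using assms by simp
  then show ?thesis using trib_tt by simp
qed

lemma trib_le: "z \<le> w \<Longrightarrow> -3 \<le> w \<Longrightarrow> trib z \<le> tt (nat (w + 3))"
proof -
  assume zw: "z \<le> w" and w: "-3 \<le> w"
  show ?thesis
  proof (cases "z < -3")
    case True then show ?thesis using trib_neg by simp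
  next
    case False
    then have "z = int (nat (z+3)) - 3" by simp
    then have "trib z = tt (nat (z+3))" using trib_tt by metis
    moreover have "nat (z+3) \<le> nat (w+3)" using zw by simp
    ultimately show ?thesis using tt_mono by simp
  qed
qed



lemma FF_trib:
  assumes mK: "m = int K + 4"
  shows "trib (m - 1) + 2 * trib (m - 4) = FF K" "trib m + 2 * trib (m - 3) = FF (Suc K)"
proof -
  have a: "trib (m - 1) = tt (K+6)" using trib_m[OF mK, of 1] by (simp add: add.commute)
  have b: "trib (m - 4) = tt (K+3)" using trib_m[OF mK, of 4] by (simp add: add.commute)
  have c: "trib m = tt (K+7)" using trib_m[OF mK, of 0] by simp
  have d: "trib (m - 3) = tt (K+4)" using trib_m[OF mK, of 3] by (simp add: add.commute)
  show "trib (m - 1) + 2 * trib (m - 4) = FF K" using a b FF_tt[of K] tt_exp[of K] by simp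
  show "trib m + 2 * trib (m - 3) = FF (Suc K)" using c d FF_Suc[of K] tt_exp[of K] by simp
qed

lemma FF_ge: "FF k \<ge> k"
  using t_ge[of k] by (simp add: FF_def)

lemma exK: "n \<ge> 58 \<Longrightarrow> \<exists>K. 3 \<le> K \<and> FF K \<le> n \<and> n < FF (Suc K)"
proof -
  assume n: "n \<ge> 58"
  have ex: "\<exists>K. n < FF (Suc K)" using FF_ge[of "Suc n"] by (intro exI[of _ n]) simp
  define K where "K = (LEAST K. n < FF (Suc K))"
  have K1: "n < FF (Suc K)" using LeastI_ex[OF ex] by (simp add: K_def)
  have K3: "3 \<le> K"
  proof (rule ccontr)
    assume "\<not> 3 \<le> K"
    then have "FF (Suc K) \<le> FF 3" using FF_mono_le by simp
    then show False using K1 FF3 n by simp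
  qed
  have "\<not> n < FF (Suc (K - 1))" using not_less_Least[of "K-1" "\<lambda>K. n < FF (Suc K)"] K3 by (simp add: K_def[symmetric])
  then have "FF K \<le> n" using K3 by (simp add: Suc_diff_1)
  with K1 K3 show ?thesis by blast
qed

theorem theoremC:
  shows "(\<forall>n::nat. 1 \<le> n \<and> n \<le> 57 \<longrightarrow> cube_count n = 0)
    \<and> (\<forall>n::nat. n \<ge> 58 \<longrightarrow>
         (\<exists>m::int. trib (m - 1) + 2 * trib (m - 4) \<le> n \<and> n < trib m + 2 * trib (m - 3))
       \<and> (\<forall>m::int. trib (m - 1) + 2 * trib (m - 4) \<le> n \<and> n < trib m + 2 * trib (m - 3) \<longrightarrow>
            m \<ge> 7 \<and>
            real (cube_count n) =
              (if real n \<le> (3 * real (trib (m - 1)) - real (trib (m - 3)) - 3) / 2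
               then real n - (4 * real (trib (m - 1)) - real (trib (m - 2))
                               - 3 * real (trib (m - 3)) + real_of_int m - 6) / 2
               else (real (trib (m - 5)) + real (trib (m - 6)) - real_of_int m + 3) / 2)))"
proof (intro conjI allI impI)
  fix n :: nat assume "1 \<le> n \<and> n \<le> 57"
  then show "cube_count n = 0" using cube_count_II II_small by simp
next
  fix n :: nat assume n: "n \<ge> 58"
  obtain K where K: "3 \<le> K" "FF K \<le> n" "n < FF (Suc K)" using exK[OF n] by blast
  define m where "m = int K + 4"
  show "\<exists>m::int. trib (m - 1) + 2 * trib (m - 4) \<le> n \<and> n < trib m + 2 * trib (m - 3)"
    using FF_trib[OF m_def] K by (intro exI[of _ m]) simp
next
  fix n :: nat and m :: int
  assume n: "n \<ge> 58" and c: "trib (m - 1) + 2 * trib (m - 4) \<le> n \<and> n < trib m + 2 * trib (m - 3)"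
  have m7: "m \<ge> 7"
  proof (rule ccontr)
    assume "\<not> m \<ge> 7"
    then have "m \<le> 6" by simp
    then have "trib m \<le> tt 9" "trib (m - 3) \<le> tt 6" using trib_le[of m 6] trib_le[of "m-3" 3] by simp_all
    moreover have "tt 9 = 44" "tt 6 = 7" by (simp_all add: eval_nat_numeral)
    ultimately show False using c n by simp
  qed
  then show "m \<ge> 7" .
  define K where "K = nat (m - 4)"
  have mK: "m = int K + 4" using m7 by (simp add: K_def)
  have K3: "K \<ge> 3" using m7 by (simp add: K_def)
  have F1: "FF K \<le> n" "n < FF (Suc K)" using c FF_trib[OF mK] by simp_all
  have cc: "cube_count n = (\<Sum>k<K. ee k) + min (ee K) (n + 1 - FF K)"
    using cube_count_II card_II[OF F1] by simp
  define S where "S = (\<Sum>k<K. ee k)"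
  define E where "E = ee K"
  define a where "a = tt K"
  define b where "b = tt (K+1)"
  define d where "d = tt (K+2)"
  have hS: "2 * S + K = a + b" using sum_ee[of K] by (simp add: S_def a_def b_def)
  have hE: "2 * E + 1 + a = d" using ee_tt(2)[of K] by (simp add: E_def a_def d_def)
  have hF: "FF K = 6*a + 8*b + 9*d" using FF_tt[of K] by (simp add: a_def b_def d_def)
  have t1: "trib (m - 1) = 4*a + 6*b + 7*d" using trib_m[OF mK, of 1] tt_exp(4)[of K] by (simp add: a_def b_def d_def add.commute)
  have t2: "trib (m - 2) = 2*a + 3*b + 4*d" using trib_m[OF mK, of 2] tt_exp(3)[of K] by (simp add: a_def b_def d_def add.commute)
  have t3: "trib (m - 3) = a + 2*b + 2*d" using trib_m[OF mK, of 3] tt_exp(2)[of K] by (simp add: a_def b_def d_def add.commute)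
  have t5: "trib (m - 5) = d" using trib_m[OF mK, of 5] by (simp add: d_def)
  have t6: "trib (m - 6) = b" using trib_m[OF mK, of 6] by (simp add: b_def)
  have rS: "2 * real S + real K = real a + real b" using hS by (metis of_nat_add of_nat_mult of_nat_numeral)
  have rE: "2 * real E + 1 + real a = real d" using hE by (metis of_nat_1 of_nat_add of_nat_mult of_nat_numeral)
  have rF: "real (FF K) = 6 * real a + 8 * real b + 9 * real d" using hF by simp
  have rm: "real_of_int m = real K + 4" using mK by simp
  have Fn: "real (FF K) \<le> real n" using F1 by simp
  show "real (cube_count n) =
              (if real n \<le> (3 * real (trib (m - 1)) - real (trib (m - 3)) - 3) / 2
               then real n - (4 * real (trib (m - 1)) - real (trib (m - 2))
                               - 3 * real (trib (m - 3)) + real_of_int m - 6) / 2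
               else (real (trib (m - 5)) + real (trib (m - 6)) - real_of_int m + 3) / 2)"
  proof (cases "real n \<le> (3 * real (trib (m - 1)) - real (trib (m - 3)) - 3) / 2")
    case True
    then have "2 * real n \<le> 11 * real a + 16 * real b + 19 * real d - 3" using t1 t3 by simp
    then have "real n + 1 - real (FF K) \<le> real E" using rE rF by simp
    then have "n + 1 - FF K \<le> E" using F1 by linarith
    then have "cube_count n = S + (n + 1 - FF K)" using cc by (simp add: S_def E_def)
    then have cN: "real (cube_count n) = real S + real n + 1 - real (FF K)" using F1 by (simp add: of_nat_diff)
    have r1: "real (trib (m - 1)) = 4 * real a + 6 * real b + 7 * real d" using t1 by simp
    have r2: "real (trib (m - 2)) = 2 * real a + 3 * real b + 4 * real d" using t2 by simp
    have r3: "real (trib (m - 3)) = real a + 2 * real b + 2 * real d" using t3 by simp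
    have rS': "real S = (real a + real b - real K) / 2" using rS by simp
    have "real (cube_count n) = real n - (4 * real (trib (m - 1)) - real (trib (m - 2))
                               - 3 * real (trib (m - 3)) + real_of_int m - 6) / 2"
      unfolding cN r1 r2 r3 rS' rF rm by (simp add: field_simps)
    then show ?thesis using True by simp
  next
    case False
    then have "2 * real n > 11 * real a + 16 * real b + 19 * real d - 3" using t1 t3 by simp
    then have "real n + 1 - real (FF K) > real E" using rE rF by simp
    then have "n + 1 - FF K > E" using F1 by linarith
    then have "cube_count n = S + E" using cc by (simp add: S_def E_def)
    then show ?thesis using False t5 t6 rS rE rm by simp
  qed
qed


end
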